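(* In the setting described in the context, the function $\mathcal{W}$ is continuous on $\mathcal{K}(\mathbb{R}^n)$ with respect to the Hausdorff distance.
   Context: Let $\|\cdot\|$ be a norm on $\mathbb{R}^n$ and $\mathrm{dist}(x,\Omega):=\inf_{y\in\Omega}\|x-y\|$. Let $\mathcal{K}(\mathbb{R}^n)$ denote the nonempty compact subsets of $\mathbb{R}^n$, with Hausdorff distance $d_H(X,Y):=\max\{\sup_{x\in X}\mathrm{dist}(x,Y),\sup_{y\in Y}\mathrm{dist}(y,X)\}$. Consider $x_{k+1}=f(x_k,u_k)$ with $f:\mathbb{R}^n\times\mathbb{R}^m\to\mathbb{R}^n$ continuous and inputs $u_k\in U$, $U\subset\mathbb{R}^m$ nonempty compact. For $x\in\mathbb{R}^n$ and $\pi:\mathbb{Z}_+\to U$, $\varphi_x^\pi(0)=x$, $\varphi_x^\pi(k+1)=f(\varphi_x^\pi(k),\pi(k))$; $\mathcal{R}(X,k):=\{\varphi_x^\pi(k):x\in X,\pi\in U^{\mathbb{Z}_+}\}$. Let $\mathcal{A}\in\mathcal{K}(\mathbb{R}^n)$ be controlled invariant. Assume local $\ell_p$-stabilizability: there exist $r>0$, $M\ge1$, $p>0$, $\lambda:[0,r]\times\mathbb{Z}_+\to\mathbb{R}_+$ such that (1) for each $k$, $s\mapsto\lambda(s,k)$ is continuous, nondecreasing, $\lambda(0,k)=0$; for each $s$, $k\mapsto\lambda(s,k)$ is nonincreasing, $\lambda(s,0)\le s$; (2) $\sum_{k}\lambda(r,k)^p<\infty$; (3) for every $x$ with $\mathrm{dist}(x,\mathcal{A})\le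 r$ there is $\pi\in U^{\mathbb{Z}_+}$ with $\mathrm{dist}(\varphi_x^\pi(k),\mathcal{A})\le M\lambda(\mathrm{dist}(x,\mathcal{A}),k)$ for all $k$. Let $\alpha:\mathbb{R}^n\to\mathbb{R}_+$ be continuous with $\underline{\alpha}\,\mathrm{dist}(x,\mathcal{A})^{\bar p}\le\alpha(x)\le\overline{\alpha}\,\mathrm{dist}(x,\mathcal{A})^{\bar p}$, constants $\underline{\alpha},\overline{\alpha}>0$, $\bar p\ge p$. Define $\Psi(X):=\inf_{y\in X}\alpha(y)$, $\mathcal{V}(X):=\sum_{k=0}^\infty\Psi(\mathcal{R}(X,k))\in[0,\infty]$, and $\mathcal{W}(X):=1-\exp(-\mathcal{V}(X))$ with the convention $\exp(-\infty)=0$. *)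

theory Defs
  imports "HOL-Analysis.Analysis"
begin

definition is_norm :: "('a::real_vector \<Rightarrow> real) \<Rightarrow> bool" where
  "is_norm N \<longleftrightarrow> (\<forall>x. N x = 0 \<longleftrightarrow> x = 0) \<and> (\<forall>c x. N (c *\<^sub>R x) = \<bar>c\<bar> * N x)
     \<and> (\<forall>x y. N (x + y) \<le> N x + N y)"

definition ndist :: "('a::real_vector \<Rightarrow> real) \<Rightarrow> 'a \<Rightarrow> 'a set \<Rightarrow> real" where
  "ndist N x S = (INF y\<in>S. N (x - y))"

definition nhausdist :: "('a::real_vector \<Rightarrow> real) \<Rightarrow> 'a set \<Rightarrow> 'a set \<Rightarrow> real" where
  "nhausdist N X Y = max (SUP x\<in>X. ndist N x Y) (SUP y\<in>Y. ndist N y X)"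

fun traj :: "('a \<Rightarrow> 'b \<Rightarrow> 'a) \<Rightarrow> 'a \<Rightarrow> (nat \<Rightarrow> 'b) \<Rightarrow> nat \<Rightarrow> 'a" where
  "traj f x \<pi> 0 = x"
| "traj f x \<pi> (Suc k) = f (traj f x \<pi> k) (\<pi> k)"

definition reach :: "('a \<Rightarrow> 'b \<Rightarrow> 'a) \<Rightarrow> 'b set \<Rightarrow> 'a set \<Rightarrow> nat \<Rightarrow> 'a set" where
  "reach f U X k = {traj f x \<pi> k | x \<pi>. x \<in> X \<and> (\<forall>j. \<pi> j \<in> U)}"

definition controlled_invariant :: "('a \<Rightarrow> 'b \<Rightarrow> 'a) \<Rightarrow> 'b set \<Rightarrow> 'a set \<Rightarrow> bool" where
  "controlled_invariant f U A \<longleftrightarrow> (\<forall>x\<in>A. \<exists>u\<in>U. f x u \<in> A)"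

definition Psi :: "('a \<Rightarrow> real) \<Rightarrow> 'a set \<Rightarrow> real" where
  "Psi \<alpha> X = (INF y\<in>X. \<alpha> y)"

definition Vfun :: "('a \<Rightarrow> 'b \<Rightarrow> 'a) \<Rightarrow> 'b set \<Rightarrow> ('a \<Rightarrow> real) \<Rightarrow> 'a set \<Rightarrow> ennreal" where
  "Vfun f U \<alpha> X = (\<Sum>k. ennreal (Psi \<alpha> (reach f U X k)))"

definition Wfun :: "('a \<Rightarrow> 'b \<Rightarrow> 'a) \<Rightarrow> 'b set \<Rightarrow> ('a \<Rightarrow> real) \<Rightarrow> 'a set \<Rightarrow> real" where
  "Wfun f U \<alpha> X = (if Vfun f U \<alpha> X = \<infinity> then 1 else 1 - exp (- enn2real (Vfun f U \<alpha> X)))"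

end

theory Submission
  imports Defs
begin

lemma norm_basic:
  fixes N :: "'a::real_vector \<Rightarrow> real"
  assumes "is_norm N"
  shows "N 0 = 0" "N x \<ge> 0" "N (- x) = N x" "N (x - y) = N (y - x)"
    "N (x + y) \<le> N x + N y"
proof -
  have h: "\<And>c x. N (c *\<^sub>R x) = \<bar>c\<bar> * N x" and t: "\<And>x y. N (x + y) \<le> N x + N y"
    using assms unfolding is_norm_def by auto
  show "N 0 = 0" using h[of 0 0] by simp
  show "N (- x) = N x" using h[of "-1" x] by simp
  have "N 0 \<le> N x + N (- x)" using t[of x "-x"] by simp
  then show "N x \<ge> 0" using h[of 0 0] h[of "-1" x] by simp
  show "N (x - y) = N (y - x)" using h[of "-1" "x - y"] by simp
  show "N (x + y) \<le> N x + N y" by (rule t)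
qed

lemma norm_upper:
  fixes N :: "'a::euclidean_space \<Rightarrow> real"
  assumes "is_norm N"
  shows "\<exists>C>0. \<forall>x. N x \<le> C * norm x"
proof -
  have h: "\<And>c x. N (c *\<^sub>R x) = \<bar>c\<bar> * N x" and t: "\<And>x y. N (x + y) \<le> N x + N y"
    using assms unfolding is_norm_def by auto
  note nb = norm_basic[OF assms]
  have sumle: "N (sum g S) \<le> (\<Sum>b\<in>S. N (g b))" if "finite S" for g :: "'a \<Rightarrow> 'a" and S
    using that
  proof (induction S rule: finite_induct)
    case empty then show ?case using nb by simp
  next
    case (insert b S)
    then show ?case using t[of "g b" "sum g S"] by simp
  qed
  define C where "C = (\<Sum>b\<in>Basis. N b) + 1"
  have C0: "C > 0" unfolding C_def using nb by (simp add: sum_nonneg add_nonneg_pos)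
  have "N x \<le> C * norm x" for x
  proof -
    have "N x = N (\<Sum>b\<in>Basis. (x \<bullet> b) *\<^sub>R b)" by (simp add: euclidean_representation)
    also have "\<dots> \<le> (\<Sum>b\<in>Basis. N ((x \<bullet> b) *\<^sub>R b))" by (rule sumle) simp
    also have "\<dots> = (\<Sum>b\<in>Basis. \<bar>x \<bullet> b\<bar> * N b)" by (simp add: h)
    also have "\<dots> \<le> (\<Sum>b\<in>Basis. norm x * N b)"
      by (intro sum_mono mult_right_mono) (auto simp: Basis_le_norm nb)
    also have "\<dots> = norm x * (\<Sum>b\<in>Basis. N b)" by (simp add: sum_distrib_left)
    also have "\<dots> \<le> C * norm x" unfolding C_def by (simp add: algebra_simps)
    finally show ?thesis .
  qed
  then show ?thesis using C0 by blast
qed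

lemma norm_cont:
  fixes N :: "'a::euclidean_space \<Rightarrow> real"
  assumes "is_norm N"
  shows "continuous_on S N"
proof -
  obtain C where C: "C > 0" "\<And>x. N x \<le> C * norm x" using norm_upper[OF assms] by blast
  note nb = norm_basic[OF assms]
  have "C-lipschitz_on S N"
  proof (rule lipschitz_onI)
    fix x y
    have "N x \<le> N (x - y) + N y" using nb(5)[of "x - y" y] by simp
    moreover have "N y \<le> N (y - x) + N x" using nb(5)[of "y - x" x] by simp
    ultimately have "\<bar>N x - N y\<bar> \<le> N (x - y)" using nb(4)[of x y] by linarith
    also have "\<dots> \<le> C * norm (x - y)" by (rule C(2))
    finally show "dist (N x) (N y) \<le> C * dist x y" by (simp add: dist_norm dist_real_def)
  qed (use C in simp)
  then show ?thesis by (rule lipschitz_on_continuous_on)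
qed

lemma norm_lower:
  fixes N :: "'a::euclidean_space \<Rightarrow> real"
  assumes "is_norm N"
  shows "\<exists>c>0. \<forall>x. c * norm x \<le> N x"
proof -
  have h: "\<And>c x. N (c *\<^sub>R x) = \<bar>c\<bar> * N x" and z: "\<And>x. N x = 0 \<longleftrightarrow> x = 0"
    using assms unfolding is_norm_def by auto
  note nb = norm_basic[OF assms]
  obtain e :: 'a where e: "e \<in> Basis" using nonempty_Basis by blast
  have ne: "sphere (0::'a) 1 \<noteq> {}" using e by (auto intro!: exI[of _ e])
  obtain x0 where x0: "x0 \<in> sphere 0 1" "\<And>y. y \<in> sphere 0 1 \<Longrightarrow> N x0 \<le> N y"
    using continuous_attains_inf[OF compact_sphere ne norm_cont[OF assms]] by blast
  have c0: "N x0 > 0" using x0(1) z[of x0] nb(2)[of x0] by auto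
  have "N x0 * norm x \<le> N x" for x
  proof (cases "x = 0")
    case True then show ?thesis by (simp add: nb)
  next
    case False
    have "N x0 \<le> N ((1 / norm x) *\<^sub>R x)" using x0(2)[of "(1 / norm x) *\<^sub>R x"] False by simp
    also have "\<dots> = N x / norm x" by (simp add: h)
    finally show ?thesis using False by (simp add: field_simps)
  qed
  then show ?thesis using c0 by (metis mult.commute)
qed

lemma traj_cont:
  assumes "continuous_on UNIV (\<lambda>(x, u). f x u)"
  shows "continuous_on UNIV (\<lambda>y. traj f y \<pi> k)"
proof (induction k)
  case 0 then show ?case by (simp add: continuous_on_id)
next
  case (Suc k)
  have "continuous_on UNIV (\<lambda>y. (traj f y \<pi> k, \<pi> k))"
    by (intro continuous_on_Pair Suc continuous_on_const)
  then have "continuous_on UNIV ((\<lambda>(x, u). f x u) \<circ> (\<lambda>y. (traj f y \<pi> k, \<pi> k)))"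
    by (rule continuous_on_compose) (rule continuous_on_subset[OF assms], simp)
  then show ?case by (simp add: o_def)
qed

lemma traj_cong: "(\<And>i. i < k \<Longrightarrow> \<pi> i = \<pi>' i) \<Longrightarrow> traj f y \<pi> k = traj f y \<pi>' k"
  by (induction k) auto

lemma traj_shift: "traj f y \<pi> (Suc k) = traj f (f y (\<pi> 0)) (\<lambda>j. \<pi> (Suc j)) k"
  by (induction k) auto

lemma traj_append:
  "traj f y (\<lambda>i. if i < K then \<pi>0 i else \<pi> (i - K)) (K + j) = traj f (traj f y \<pi>0 K) \<pi> j"
proof (induction j)
  case 0 then show ?case by (simp, intro traj_cong, simp)
next
  case (Suc j) then show ?case by simp
qed

lemma inf_cont:
  fixes G :: "'a::heine_borel \<times> 'b::metric_space \<Rightarrow> real"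
  assumes G: "continuous_on UNIV G" and G0: "\<And>p. G p \<ge> 0"
    and U: "compact U" "U \<noteq> {}"
  shows "continuous_on UNIV (\<lambda>y. INF u\<in>U. G (y, u))"
  unfolding continuous_on_iff
proof (intro ballI allI impI)
  fix y :: 'a and e :: real assume "e > 0"
  have "compact (cball y 1 \<times> U)" using U by (intro compact_Times) auto
  then have "uniformly_continuous_on (cball y 1 \<times> U) G"
    by (rule compact_uniformly_continuous[OF continuous_on_subset[OF G], rotated]) simp
  then obtain d' where d': "d' > 0" "\<And>p q. p \<in> cball y 1 \<times> U \<Longrightarrow> q \<in> cball y 1 \<times> U \<Longrightarrow>
      dist q p < d' \<Longrightarrow> dist (G q) (G p) < e/2"
    unfolding uniformly_continuous_on_def using \<open>e > 0\<close> by (metis half_gt_zero)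
  show "\<exists>d>0. \<forall>y'\<in>UNIV. dist y' y < d \<longrightarrow> dist (INF u\<in>U. G (y', u)) (INF u\<in>U. G (y, u)) < e"
  proof (intro exI[of _ "min d' 1"] conjI ballI impI)
    show "min d' 1 > 0" using d' by simp
    fix y' assume y': "dist y' y < min d' 1"
    have cl: "\<bar>G (y', u) - G (y, u)\<bar> < e/2" if "u \<in> U" for u
    proof -
      have "dist (y', u) (y, u) < d'" using y' by (simp add: dist_Pair_Pair)
      moreover have "(y', u) \<in> cball y 1 \<times> U" "(y, u) \<in> cball y 1 \<times> U"
        using y' that by (auto simp: dist_commute)
      ultimately show ?thesis using d'(2) by (auto simp: dist_real_def)
    qed
    have bb: "bdd_below ((\<lambda>u. G (z, u)) ` U)" for z
      using G0 by (intro bdd_belowI2[of _ 0]) auto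
    have "(INF u\<in>U. G (y', u)) \<le> (INF u\<in>U. G (y, u)) + e/2"
    proof -
      have "(INF u\<in>U. G (y', u)) - e/2 \<le> (INF u\<in>U. G (y, u))"
      proof (rule cINF_greatest[OF U(2)])
        fix u assume u: "u \<in> U"
        have "(INF u\<in>U. G (y', u)) \<le> G (y', u)" by (rule cINF_lower[OF bb u])
        then show "(INF u\<in>U. G (y', u)) - e/2 \<le> G (y, u)" using cl[OF u] by linarith
      qed
      then show ?thesis by linarith
    qed
    moreover have "(INF u\<in>U. G (y, u)) \<le> (INF u\<in>U. G (y', u)) + e/2"
    proof -
      have "(INF u\<in>U. G (y, u)) - e/2 \<le> (INF u\<in>U. G (y', u))"
      proof (rule cINF_greatest[OF U(2)])
        fix u assume u: "u \<in> U"
        have "(INF u\<in>U. G (y, u)) \<le> G (y, u)" by (rule cINF_lower[OF bb u])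
        then show "(INF u\<in>U. G (y, u)) - e/2 \<le> G (y', u)" using cl[OF u] by linarith
      qed
      then show ?thesis by linarith
    qed
    ultimately show "dist (INF u\<in>U. G (y', u)) (INF u\<in>U. G (y, u)) < e"
      using \<open>e > 0\<close> by (simp add: dist_real_def abs_le_iff)
  qed
qed

fun Hk :: "('a \<Rightarrow> 'b \<Rightarrow> 'a) \<Rightarrow> 'b set \<Rightarrow> ('a \<Rightarrow> real) \<Rightarrow> nat \<Rightarrow> 'a \<Rightarrow> real" where
  "Hk f U \<alpha> 0 y = \<alpha> y"
| "Hk f U \<alpha> (Suc k) y = (INF u\<in>U. Hk f U \<alpha> k (f y u))"

locale hk_setting =
  fixes f :: "'a::heine_borel \<Rightarrow> 'b::metric_space \<Rightarrow> 'a" and U :: "'b set" and \<alpha> :: "'a \<Rightarrow> real"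
  assumes f_cont: "continuous_on UNIV (\<lambda>(x, u). f x u)"
    and U: "compact U" "U \<noteq> {}"
    and \<alpha>_cont: "continuous_on UNIV \<alpha>" and \<alpha>0: "\<And>x. \<alpha> x \<ge> 0"
begin

lemma Hk_nonneg: "Hk f U \<alpha> k y \<ge> 0"
proof (induction k arbitrary: y)
  case 0 then show ?case using \<alpha>0 by simp
next
  case (Suc k) then show ?case using U(2) by (simp, intro cINF_greatest) auto
qed

lemma Hk_cont: "continuous_on UNIV (Hk f U \<alpha> k)"
proof (induction k)
  case 0 then show ?case using \<alpha>_cont by simp
next
  case (Suc k)
  have "continuous_on UNIV (Hk f U \<alpha> k \<circ> (\<lambda>(x, u). f x u))"
    by (rule continuous_on_compose[OF f_cont]) (rule continuous_on_subset[OF Suc], simp)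
  then have "continuous_on UNIV (\<lambda>y. INF u\<in>U. (Hk f U \<alpha> k \<circ> (\<lambda>(x, u). f x u)) (y, u))"
    by (rule inf_cont) (auto simp: Hk_nonneg U)
  then show ?case by (simp add: o_def)
qed

lemma Hk_le: "(\<forall>j. \<pi> j \<in> U) \<Longrightarrow> Hk f U \<alpha> k y \<le> \<alpha> (traj f y \<pi> k)"
proof (induction k arbitrary: y \<pi>)
  case 0 then show ?case by simp
next
  case (Suc k)
  have "Hk f U \<alpha> (Suc k) y \<le> Hk f U \<alpha> k (f y (\<pi> 0))"
    using Suc.prems Hk_nonneg by (auto intro!: cINF_lower bdd_belowI2[of _ 0])
  also have "\<dots> \<le> \<alpha> (traj f (f y (\<pi> 0)) (\<lambda>j. \<pi> (Suc j)) k)"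
    using Suc.IH Suc.prems by auto
  finally show ?case by (simp only: traj_shift)
qed

lemma Hk_attained: "\<exists>\<pi>. (\<forall>j. \<pi> j \<in> U) \<and> \<alpha> (traj f y \<pi> k) = Hk f U \<alpha> k y"
proof (induction k arbitrary: y)
  case 0
  obtain u where "u \<in> U" using U(2) by blast
  then show ?case by (intro exI[of _ "\<lambda>_. u"]) simp
next
  case (Suc k)
  have "continuous_on U (\<lambda>u. Hk f U \<alpha> k (f y u))"
  proof -
    have "continuous_on UNIV (Hk f U \<alpha> k \<circ> (\<lambda>(x, u). f x u))"
      by (rule continuous_on_compose[OF f_cont]) (rule continuous_on_subset[OF Hk_cont], simp)
    moreover have "continuous_on UNIV (\<lambda>u. (y, u))" by (intro continuous_intros)
    ultimately have "continuous_on UNIV ((Hk f U \<alpha> k \<circ> (\<lambda>(x, u). f x u)) \<circ> (\<lambda>u. (y, u)))"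
      by (metis continuous_on_compose continuous_on_subset subset_UNIV)
    then show ?thesis by (auto simp: o_def intro: continuous_on_subset)
  qed
  then obtain u0 where u0: "u0 \<in> U" "\<And>u. u \<in> U \<Longrightarrow> Hk f U \<alpha> k (f y u0) \<le> Hk f U \<alpha> k (f y u)"
    using continuous_attains_inf[OF U(1) U(2)] by blast
  have eq: "Hk f U \<alpha> (Suc k) y = Hk f U \<alpha> k (f y u0)"
  proof (rule antisym)
    show "Hk f U \<alpha> (Suc k) y \<le> Hk f U \<alpha> k (f y u0)"
      using u0 Hk_nonneg by (auto intro!: cINF_lower bdd_belowI2[of _ 0])
    show "Hk f U \<alpha> k (f y u0) \<le> Hk f U \<alpha> (Suc k) y"
      using u0 U by (auto intro!: cINF_greatest)
  qed
  obtain \<pi>' where \<pi>': "\<forall>j. \<pi>' j \<in> U" "\<alpha> (traj f (f y u0) \<pi>' k) = Hk f U \<alpha> k (f y u0)"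
    using Suc by blast
  define \<pi> where "\<pi> = case_nat u0 \<pi>'"
  have "\<forall>j. \<pi> j \<in> U" using \<pi>' u0 by (auto simp: \<pi>_def split: nat.split)
  moreover have "\<alpha> (traj f y \<pi> (Suc k)) = Hk f U \<alpha> (Suc k) y"
    unfolding traj_shift eq using \<pi>' by (simp add: \<pi>_def)
  ultimately show ?case by blast
qed

lemma reach_ne: assumes "X \<noteq> {}" shows "reach f U X k \<noteq> {}"
proof -
  obtain u where u: "u \<in> U" using U(2) by blast
  obtain x where x: "x \<in> X" using assms by blast
  have "traj f x (\<lambda>_. u) k \<in> reach f U X k" unfolding reach_def using u x by blast
  then show ?thesis by blast
qed

lemma Psi_reach: assumes "X \<noteq> {}"
  shows "Psi \<alpha> (reach f U X k) = (INF x\<in>X. Hk f U \<alpha> k x)"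
proof (rule antisym)
  show "(INF x\<in>X. Hk f U \<alpha> k x) \<le> Psi \<alpha> (reach f U X k)"
    unfolding Psi_def
  proof (rule cINF_greatest[OF reach_ne[OF assms]])
    fix z assume "z \<in> reach f U X k"
    then obtain x \<pi> where z: "z = traj f x \<pi> k" "x \<in> X" "\<forall>j. \<pi> j \<in> U" unfolding reach_def by blast
    have "(INF x\<in>X. Hk f U \<alpha> k x) \<le> Hk f U \<alpha> k x"
      using z Hk_nonneg by (auto intro!: cINF_lower bdd_belowI2[of _ 0])
    also have "\<dots> \<le> \<alpha> z" using Hk_le z by simp
    finally show "(INF x\<in>X. Hk f U \<alpha> k x) \<le> \<alpha> z" .
  qed
  show "Psi \<alpha> (reach f U X k) \<le> (INF x\<in>X. Hk f U \<alpha> k x)"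
  proof (rule cINF_greatest[OF assms])
    fix x assume x: "x \<in> X"
    obtain \<pi> where \<pi>: "\<forall>j. \<pi> j \<in> U" "\<alpha> (traj f x \<pi> k) = Hk f U \<alpha> k x"
      using Hk_attained by blast
    have "traj f x \<pi> k \<in> reach f U X k" using x \<pi> unfolding reach_def by blast
    then have "Psi \<alpha> (reach f U X k) \<le> \<alpha> (traj f x \<pi> k)"
      unfolding Psi_def using \<alpha>0 by (auto intro!: cINF_lower bdd_belowI2[of _ 0])
    then show "Psi \<alpha> (reach f U X k) \<le> Hk f U \<alpha> k x" using \<pi> by simp
  qed
qed

end

lemma exp_lip:
  fixes a b :: real assumes "a \<ge> 0" "b \<ge> 0"
  shows "\<bar>exp (- a) - exp (- b)\<bar> \<le> \<bar>a - b\<bar>"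
proof -
  have *: "exp (- a) - exp (- b) \<le> \<bar>a - b\<bar>" if "a \<ge> 0" "b \<ge> 0" for a b :: real
  proof (cases "a < b")
    case False
    then have "exp (- a) \<le> exp (- b)" by simp
    then show ?thesis using abs_ge_zero[of "a - b"] by linarith
  next
    case True
    have "exp (- a) - exp (- b) = exp (- a) * (1 - exp (a - b))"
      by (simp add: algebra_simps flip: exp_add)
    also have "\<dots> \<le> 1 * (1 - exp (a - b))"
      using True that by (intro mult_right_mono) auto
    also have "\<dots> \<le> b - a" using exp_ge_add_one_self[of "a - b"] by (simp only: mult_1)
    finally show ?thesis using True by simp
  qed
  show ?thesis using *[of a b] *[of b a] assms by (simp add: abs_le_iff abs_minus_commute)
qed

locale cs = hk_setting f U \<alpha>
  for f :: "'a::euclidean_space \<Rightarrow> 'b::metric_space \<Rightarrow> 'a" and U \<alpha> +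
  fixes N :: "'a \<Rightarrow> real" and A :: "'a set"
    and r M p pbar alo ahi :: real and lam :: "real \<Rightarrow> nat \<Rightarrow> real" and c C :: real
  assumes normN: "is_norm N"
    and c_pos: "c > 0" and c_low: "\<And>x. c * norm x \<le> N x"
    and C_pos: "C > 0" and C_up: "\<And>x. N x \<le> C * norm x"
    and A_ne: "A \<noteq> {}"
    and r_pos: "r > 0" and M_ge: "M \<ge> 1" and p_pos: "p > 0"
    and lam_nonneg: "\<And>s k. s \<in> {0..r} \<Longrightarrow> lam s k \<ge> 0"
    and lam_cont: "\<And>k. continuous_on {0..r} (\<lambda>s. lam s k)"
    and lam_mono: "\<And>k s t. s \<in> {0..r} \<Longrightarrow> t \<in> {0..r} \<Longrightarrow> s \<le> t \<Longrightarrow> lam s k \<le> lam t k"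
    and lam_zero: "\<And>k. lam 0 k = 0"
    and lam_antimono: "\<And>s k l. s \<in> {0..r} \<Longrightarrow> k \<le> l \<Longrightarrow> lam s l \<le> lam s k"
    and lam_init: "\<And>s. s \<in> {0..r} \<Longrightarrow> lam s 0 \<le> s"
    and lam_summable: "summable (\<lambda>k. lam r k powr p)"
    and stabilizable: "\<And>x. ndist N x A \<le> r \<Longrightarrow>
        \<exists>\<pi>. (\<forall>j. \<pi> j \<in> U) \<and> (\<forall>k. ndist N (traj f x \<pi> k) A \<le> M * lam (ndist N x A) k)"
    and alo_pos: "alo > 0" and ahi_pos: "ahi > 0" and pbar_ge: "pbar \<ge> p"
    and \<alpha>_lower: "\<And>x. alo * ndist N x A powr pbar \<le> \<alpha> x"
    and \<alpha>_upper: "\<And>x. \<alpha> x \<le> ahi * ndist N x A powr pbar"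
begin

lemmas nb = norm_basic[OF normN]

definition close :: "real \<Rightarrow> 'a set \<Rightarrow> 'a set \<Rightarrow> bool" where
  "close \<delta> X Y \<longleftrightarrow> (\<forall>y\<in>Y. \<exists>x\<in>X. N (y - x) < \<delta>) \<and> (\<forall>x\<in>X. \<exists>y\<in>Y. N (x - y) < \<delta>)"

lemma close_mono: "close \<delta> X Y \<Longrightarrow> \<delta> \<le> \<delta>' \<Longrightarrow> close \<delta>' X Y"
  unfolding close_def by force

definition T :: "nat \<Rightarrow> 'a set \<Rightarrow> real" where
  "T k X = Psi \<alpha> (reach f U X k)"

lemma ndist_nonneg: "ndist N x S \<ge> 0" if "S \<noteq> {}"
  unfolding ndist_def using that nb(2) by (intro cINF_greatest) auto

lemma ndist_le: "y \<in> S \<Longrightarrow> ndist N x S \<le> N (x - y)"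
  unfolding ndist_def using nb(2) by (intro cINF_lower bdd_belowI2[of _ 0]) auto

lemma ndist_tri: "S \<noteq> {} \<Longrightarrow> ndist N a S \<le> N (a - b) + ndist N b S"
proof -
  assume S: "S \<noteq> {}"
  have "ndist N a S - N (a - b) \<le> ndist N b S"
    unfolding ndist_def[of N b S]
  proof (rule cINF_greatest[OF S])
    fix w assume "w \<in> S"
    then have "ndist N a S \<le> N (a - w)" by (rule ndist_le)
    also have "\<dots> \<le> N (a - b) + N (b - w)" using nb(5)[of "a - b" "b - w"] by simp
    finally show "ndist N a S - N (a - b) \<le> N (b - w)" by simp
  qed
  then show ?thesis by simp
qed

lemma T_nonneg: "X \<noteq> {} \<Longrightarrow> T k X \<ge> 0"
  unfolding T_def Psi_def using reach_ne \<alpha>0 by (intro cINF_greatest) auto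

lemma T_le: "z \<in> reach f U X k \<Longrightarrow> T k X \<le> \<alpha> z"
  unfolding T_def Psi_def using \<alpha>0 by (intro cINF_lower bdd_belowI2[of _ 0]) auto

lemma haus_close:
  assumes X: "compact X" "X \<noteq> {}" and Y: "compact Y" "Y \<noteq> {}"
    and h: "nhausdist N X Y < \<delta>"
  shows "close \<delta> X Y"
proof -
  have bdd: "bdd_above ((\<lambda>x. ndist N x S) ` R)" if R: "compact R" and S: "S \<noteq> {}" for R S
  proof -
    obtain s where s: "s \<in> S" using S by blast
    obtain B where B: "\<forall>x\<in>R. norm x \<le> B" using compact_imp_bounded[OF R] bounded_iff by blast
    show ?thesis
    proof (rule bdd_aboveI2)
      fix x assume "x \<in> R"
      have "ndist N x S \<le> N (x - s)" by (rule ndist_le[OF s])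
      also have "\<dots> \<le> C * norm (x - s)" by (rule C_up)
      also have "\<dots> \<le> C * (B + norm s)"
        using B \<open>x \<in> R\<close> C_pos norm_triangle_ineq4[of x s] by (intro mult_left_mono) auto
      finally show "ndist N x S \<le> C * (B + norm s)" .
    qed
  qed
  have 1: "ndist N x Y < \<delta>" if "x \<in> X" for x
  proof -
    have "ndist N x Y \<le> (SUP x\<in>X. ndist N x Y)" by (rule cSUP_upper[OF that bdd[OF X(1) Y(2)]])
    then show ?thesis using h unfolding nhausdist_def by linarith
  qed
  have 2: "ndist N y X < \<delta>" if "y \<in> Y" for y
  proof -
    have "ndist N y X \<le> (SUP y\<in>Y. ndist N y X)" by (rule cSUP_upper[OF that bdd[OF Y(1) X(2)]])
    then show ?thesis using h unfolding nhausdist_def by linarith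
  qed
  show ?thesis unfolding close_def
  proof (intro conjI ballI)
    fix y assume "y \<in> Y"
    from 2[OF this] have "(INF x\<in>X. N (y - x)) < \<delta>" unfolding ndist_def .
    then show "\<exists>x\<in>X. N (y - x) < \<delta>"
      using cInf_lessD[of "(\<lambda>x. N (y - x)) ` X" \<delta>] X(2) by auto
  next
    fix x assume "x \<in> X"
    from 1[OF this] have "(INF y\<in>Y. N (x - y)) < \<delta>" unfolding ndist_def .
    then show "\<exists>y\<in>Y. N (x - y) < \<delta>"
      using cInf_lessD[of "(\<lambda>y. N (x - y)) ` Y" \<delta>] Y(2) by auto
  qed
qed

lemma N_small: assumes "N v < c * e" shows "norm v < e"
proof -
  have "c * norm v < c * e" using c_low[of v] assms by linarith
  then show ?thesis using c_pos by simp
qed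

lemma inf_haus:
  fixes H :: "'a \<Rightarrow> real"
  assumes H: "continuous_on UNIV H" and H0: "\<And>x. H x \<ge> 0"
    and X: "compact X" "X \<noteq> {}" and e: "e > 0"
  shows "\<exists>\<delta>>0. \<forall>Y. Y \<noteq> {} \<and> close \<delta> X Y \<longrightarrow> \<bar>(INF y\<in>Y. H y) - (INF x\<in>X. H x)\<bar> \<le> e"
proof -
  obtain B where B: "\<forall>x\<in>X. norm x \<le> B" using compact_imp_bounded[OF X(1)] bounded_iff by blast
  have "uniformly_continuous_on (cball 0 (B + 1)) H"
    by (rule compact_uniformly_continuous[OF continuous_on_subset[OF H]]) auto
  then obtain d' where d': "d' > 0" "\<And>p q. p \<in> cball 0 (B + 1) \<Longrightarrow> q \<in> cball 0 (B + 1) \<Longrightarrow>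
      dist q p < d' \<Longrightarrow> dist (H q) (H p) < e"
    unfolding uniformly_continuous_on_def using e by metis
  define \<delta> where "\<delta> = c * min d' 1"
  have \<delta>: "\<delta> > 0" unfolding \<delta>_def using c_pos d' by simp
  have bb: "bdd_below (H ` S)" for S using H0 by (intro bdd_belowI2[of _ 0]) auto
  have near: "\<bar>H y - H x\<bar> < e" if "x \<in> X" "N (y - x) < \<delta>" for x y
  proof -
    have n: "norm (y - x) < min d' 1" using N_small that(2) unfolding \<delta>_def by blast
    have "norm y \<le> norm x + norm (y - x)" using norm_triangle_ineq2[of y x] by simp
    then have "y \<in> cball 0 (B + 1)" "x \<in> cball 0 (B + 1)" using B that(1) n by auto
    moreover have "dist y x < d'" using n by (simp add: dist_norm)
    ultimately show ?thesis using d'(2) by (force simp: dist_real_def)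
  qed
  show ?thesis
  proof (intro exI[of _ \<delta>] conjI allI impI)
    show "\<delta> > 0" by (rule \<delta>)
    fix Y assume Y: "Y \<noteq> {} \<and> close \<delta> X Y"
    have a: "(INF x\<in>X. H x) - e \<le> (INF y\<in>Y. H y)"
    proof (rule cINF_greatest)
      show "Y \<noteq> {}" using Y by simp
      fix y assume "y \<in> Y"
      then obtain x where x: "x \<in> X" "N (y - x) < \<delta>" using Y unfolding close_def by blast
      have "(INF x\<in>X. H x) \<le> H x" by (rule cINF_lower[OF bb x(1)])
      then show "(INF x\<in>X. H x) - e \<le> H y" using near[OF x] by linarith
    qed
    have b: "(INF y\<in>Y. H y) - e \<le> (INF x\<in>X. H x)"
    proof (rule cINF_greatest)
      show "X \<noteq> {}" using X by simp
      fix x assume x: "x \<in> X"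
      then obtain y where y: "y \<in> Y" "N (x - y) < \<delta>" using Y unfolding close_def by blast
      have "(INF y\<in>Y. H y) \<le> H y" by (rule cINF_lower[OF bb y(1)])
      then show "(INF y\<in>Y. H y) - e \<le> H x" using near[OF x, of y] y(2) nb(4)[of x y] by linarith
    qed
    show "\<bar>(INF y\<in>Y. H y) - (INF x\<in>X. H x)\<bar> \<le> e" using a b by (simp add: abs_le_iff)
  qed
qed

lemma T_cont:
  assumes X: "compact X" "X \<noteq> {}" and e: "e > 0"
  shows "\<exists>\<delta>>0. \<forall>Y. Y \<noteq> {} \<and> close \<delta> X Y \<longrightarrow> \<bar>T k Y - T k X\<bar> \<le> e"
proof -
  have "\<exists>\<delta>>0. \<forall>Y. Y \<noteq> {} \<and> close \<delta> X Y \<longrightarrow> \<bar>(INF y\<in>Y. Hk f U \<alpha> k y) - (INF x\<in>X. Hk f U \<alpha> k x)\<bar> \<le> e"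
    by (rule inf_haus[OF Hk_cont _ X e]) (rule Hk_nonneg)
  then obtain \<delta> where "\<delta> > 0" "\<And>Y. Y \<noteq> {} \<and> close \<delta> X Y \<Longrightarrow> \<bar>(INF y\<in>Y. Hk f U \<alpha> k y) - (INF x\<in>X. Hk f U \<alpha> k x)\<bar> \<le> e"
    by blast
  then show ?thesis unfolding T_def using Psi_reach X(2) by (intro exI[of _ \<delta>]) auto
qed

lemma psum_cont:
  assumes X: "compact X" "X \<noteq> {}"
  shows "e > 0 \<Longrightarrow> \<exists>\<delta>>0. \<forall>Y. Y \<noteq> {} \<and> close \<delta> X Y \<longrightarrow>
     \<bar>(\<Sum>k<K. T k Y) - (\<Sum>k<K. T k X)\<bar> \<le> e"
proof (induction K arbitrary: e)
  case 0 then show ?case by (intro exI[of _ 1]) auto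
next
  case (Suc K)
  obtain d1 where d1: "d1 > 0" "\<And>Y. Y \<noteq> {} \<and> close d1 X Y \<Longrightarrow>
     \<bar>(\<Sum>k<K. T k Y) - (\<Sum>k<K. T k X)\<bar> \<le> e/2" using Suc.IH[of "e/2"] Suc.prems by auto
  obtain d2 where d2: "d2 > 0" "\<And>Y. Y \<noteq> {} \<and> close d2 X Y \<Longrightarrow> \<bar>T K Y - T K X\<bar> \<le> e/2"
    using T_cont[OF X, of "e/2" K] Suc.prems by auto
  show ?case
  proof (intro exI[of _ "min d1 d2"] conjI allI impI)
    show "min d1 d2 > 0" using d1 d2 by simp
    fix Y assume Y: "Y \<noteq> {} \<and> close (min d1 d2) X Y"
    then have "close d1 X Y" "close d2 X Y" using close_mono by auto
    then have "\<bar>(\<Sum>k<K. T k Y) - (\<Sum>k<K. T k X)\<bar> \<le> e/2" "\<bar>T K Y - T K X\<bar> \<le> e/2"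
      using d1 d2 Y by auto
    moreover have "(\<Sum>k<Suc K. T k Y) - (\<Sum>k<Suc K. T k X) = ((\<Sum>k<K. T k Y) - (\<Sum>k<K. T k X)) + (T K Y - T K X)" by simp
    ultimately show "\<bar>(\<Sum>k<Suc K. T k Y) - (\<Sum>k<Suc K. T k X)\<bar> \<le> e"
      using abs_triangle_ineq[of "(\<Sum>k<K. T k Y) - (\<Sum>k<K. T k X)" "T K Y - T K X"] by linarith
  qed
qed

end

lemma in_reach: "x \<in> X \<Longrightarrow> \<forall>j. \<pi> j \<in> U \<Longrightarrow> traj f x \<pi> k \<in> reach f U X k"
  unfolding reach_def by auto

context cs
begin

definition g :: "real \<Rightarrow> nat \<Rightarrow> real" where
  "g s j = ahi * (M * lam s j) powr pbar"

definition D :: real where "D = ahi * M powr pbar * r powr (pbar - p)"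

lemma g_bound:
  assumes s: "s \<in> {0..r}"
  shows "0 \<le> g s j" "g s j \<le> D * lam r j powr p"
proof -
  show "0 \<le> g s j" unfolding g_def using ahi_pos by simp
  have l0: "lam s j \<ge> 0" using lam_nonneg[OF s] .
  have l1: "lam s j \<le> lam r j" using lam_mono[OF s, of r j] r_pos s by auto
  have l2: "lam s j \<le> r"
    using lam_antimono[OF s, of 0 j] lam_init[OF s] s by auto
  have "(M * lam s j) powr pbar = M powr pbar * (lam s j powr p * lam s j powr (pbar - p))"
    by (simp add: powr_mult flip: powr_add)
  also have "\<dots> \<le> M powr pbar * (lam r j powr p * r powr (pbar - p))"
    using l0 l1 l2 pbar_ge p_pos
    by (intro mult_left_mono mult_mono powr_mono2) auto
  finally show "g s j \<le> D * lam r j powr p"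
    unfolding g_def D_def using ahi_pos by (simp add: algebra_simps)
qed

lemma g_summable: "s \<in> {0..r} \<Longrightarrow> summable (g s)"
  by (rule summable_comparison_test'[of "\<lambda>j. D * lam r j powr p" 0])
     (auto intro: summable_mult lam_summable simp: g_bound)

lemma tail_small:
  assumes e: "e > 0"
  shows "\<exists>\<rho>>0. \<rho> \<le> r \<and> (\<forall>s\<in>{0..\<rho>}. suminf (g s) \<le> e)"
proof -
  have ev: "eventually (\<lambda>s. s \<in> {0<..<r}) (at_right (0::real))"
    by (rule eventually_at_right_real[OF r_pos])
  have lim: "((\<lambda>s. g s j) \<longlongrightarrow> 0) (at_right 0)" for j
  proof -
    have "((\<lambda>s. lam s j) \<longlongrightarrow> lam 0 j) (at_right 0)"
      by (rule continuous_on_Icc_at_rightD[OF lam_cont r_pos])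
    then have "((\<lambda>s. M * lam s j) \<longlongrightarrow> 0) (at_right 0)"
      by (intro tendsto_mult_right_zero) (simp add: lam_zero)
    moreover have "eventually (\<lambda>s. 0 \<le> M * lam s j) (at_right 0)"
      using ev by eventually_elim (use M_ge lam_nonneg in auto)
    ultimately have "((\<lambda>s. (M * lam s j) powr pbar) \<longlongrightarrow> 0) (at_right 0)"
      using pbar_ge p_pos by (intro tendsto_zero_powrI[OF _ tendsto_const]) auto
    then show ?thesis unfolding g_def by (rule tendsto_mult_right_zero)
  qed
  have bound: "eventually (\<lambda>(k, s). norm (g s k) \<le> D * lam r k powr p) (at_top \<times>\<^sub>F at_right 0)"
    unfolding eventually_prod_filter
    by (intro exI[of _ "\<lambda>_. True"] exI[of _ "\<lambda>s. s \<in> {0<..<r}"] conjI ev)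
       (auto simp: g_bound)
  have sm: "summable (\<lambda>k. D * lam r k powr p)" by (intro summable_mult lam_summable)
  have "((\<lambda>s. suminf (\<lambda>k. g s k)) \<longlongrightarrow> (\<Sum>k. 0)) (at_right 0)"
    using tannerys_theorem[OF lim bound sm] by simp
  then have "((\<lambda>s. suminf (g s)) \<longlongrightarrow> 0) (at_right 0)" by simp
  then have "eventually (\<lambda>s. suminf (g s) < e) (at_right 0)"
    using e by (rule order_tendstoD(2))
  then obtain b where b: "b > 0" "\<And>s. s > 0 \<Longrightarrow> s < b \<Longrightarrow> suminf (g s) < e"
    unfolding eventually_at_right[OF zero_less_one] by blast
  show ?thesis
  proof (intro exI[of _ "min (b/2) r"] conjI ballI)
    show "min (b/2) r > 0" using b r_pos by simp
    show "min (b/2) r \<le> r" by simp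
    fix s assume s: "s \<in> {0..min (b/2) r}"
    show "suminf (g s) \<le> e"
    proof (cases "s = 0")
      case True
      then have "g s = (\<lambda>_. 0)" by (auto simp: g_def lam_zero fun_eq_iff)
      then show ?thesis using e by simp
    next
      case False
      then show ?thesis using b(2)[of s] s b(1) by auto
    qed
  qed
qed

lemma stab_tail:
  assumes "ndist N z A \<le> r"
  shows "\<exists>\<pi>. (\<forall>j. \<pi> j \<in> U) \<and> (\<forall>j. \<alpha> (traj f z \<pi> j) \<le> g (ndist N z A) j)"
proof -
  obtain \<pi> where \<pi>: "\<forall>j. \<pi> j \<in> U" "\<forall>k. ndist N (traj f z \<pi> k) A \<le> M * lam (ndist N z A) k"
    using stabilizable[OF assms] by blast
  have "\<alpha> (traj f z \<pi> j) \<le> g (ndist N z A) j" for j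
  proof -
    have "\<alpha> (traj f z \<pi> j) \<le> ahi * ndist N (traj f z \<pi> j) A powr pbar" by (rule \<alpha>_upper)
    also have "\<dots> \<le> ahi * (M * lam (ndist N z A) j) powr pbar"
      using \<pi>(2) ndist_nonneg[OF A_ne] pbar_ge p_pos ahi_pos
      by (intro mult_left_mono powr_mono2) auto
    finally show ?thesis unfolding g_def .
  qed
  then show ?thesis using \<pi> by blast
qed

lemma Y_tail:
  assumes Y: "Y \<noteq> {}" and y0: "y0 \<in> Y" and \<pi>0: "\<forall>j. \<pi>0 j \<in> U"
    and dz: "ndist N (traj f y0 \<pi>0 K) A \<le> \<rho>" and \<rho>: "\<rho> \<le> r"
    and gs: "\<forall>s\<in>{0..\<rho>}. suminf (g s) \<le> e"
  shows "summable (\<lambda>k. T k Y) \<and> suminf (\<lambda>k. T k Y) \<le> (\<Sum>k<K. T k Y) + e"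
proof -
  define z where "z = traj f y0 \<pi>0 K"
  have dz0: "ndist N z A \<in> {0..\<rho>}" "ndist N z A \<in> {0..r}"
    using dz \<rho> ndist_nonneg[OF A_ne] unfolding z_def by auto
  have "\<exists>\<pi>. (\<forall>j. \<pi> j \<in> U) \<and> (\<forall>j. \<alpha> (traj f z \<pi> j) \<le> g (ndist N z A) j)"
    using stab_tail[of z] dz0(2) by simp
  then obtain \<pi> where \<pi>: "\<forall>j. \<pi> j \<in> U" "\<forall>j. \<alpha> (traj f z \<pi> j) \<le> g (ndist N z A) j"
    by blast
  define \<pi>c where "\<pi>c = (\<lambda>i. if i < K then \<pi>0 i else \<pi> (i - K))"
  have adm: "\<forall>j. \<pi>c j \<in> U" using \<pi> \<pi>0 unfolding \<pi>c_def by auto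
  have le: "T (j + K) Y \<le> g (ndist N z A) j" for j
  proof -
    have "traj f y0 \<pi>c (K + j) \<in> reach f U Y (K + j)"
      using y0 adm by (rule in_reach)
    then have "T (K + j) Y \<le> \<alpha> (traj f y0 \<pi>c (K + j))" by (rule T_le)
    also have "traj f y0 \<pi>c (K + j) = traj f z \<pi> j"
      unfolding \<pi>c_def z_def by (rule traj_append)
    finally have "T (K + j) Y \<le> g (ndist N z A) j" using \<pi>(2) order_trans by blast
    then show ?thesis by (simp add: add.commute)
  qed
  have sg: "summable (g (ndist N z A))" by (rule g_summable[OF dz0(2)])
  have s1: "summable (\<lambda>j. T (j + K) Y)"
    by (rule summable_comparison_test'[OF sg, of 0]) (simp add: T_nonneg[OF Y] le)
  then have s2: "summable (\<lambda>k. T k Y)" using summable_iff_shift[of "\<lambda>k. T k Y" K] by blast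
  have "suminf (\<lambda>k. T k Y) = (\<Sum>j. T (j + K) Y) + (\<Sum>k<K. T k Y)"
    by (rule suminf_split_initial_segment[OF s2])
  moreover have "(\<Sum>j. T (j + K) Y) \<le> suminf (g (ndist N z A))"
    by (rule suminf_le[OF _ s1 sg]) (rule le)
  moreover have "suminf (g (ndist N z A)) \<le> e" using gs dz0 by auto
  ultimately show ?thesis using s2 by linarith
qed

lemma W_eq:
  assumes Y: "Y \<noteq> {}"
  shows "summable (\<lambda>k. T k Y) \<Longrightarrow> Wfun f U \<alpha> Y = 1 - exp (- suminf (\<lambda>k. T k Y))"
    and "\<not> summable (\<lambda>k. T k Y) \<Longrightarrow> Wfun f U \<alpha> Y = 1"
proof -
  have V: "Vfun f U \<alpha> Y = (\<Sum>k. ennreal (T k Y))" unfolding Vfun_def T_def ..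
  show "summable (\<lambda>k. T k Y) \<Longrightarrow> Wfun f U \<alpha> Y = 1 - exp (- suminf (\<lambda>k. T k Y))"
  proof -
    assume s: "summable (\<lambda>k. T k Y)"
    have "Vfun f U \<alpha> Y = ennreal (suminf (\<lambda>k. T k Y))"
      unfolding V by (rule suminf_ennreal2[OF T_nonneg[OF Y] s])
    moreover have S0: "suminf (\<lambda>k. T k Y) \<ge> 0" by (rule suminf_nonneg[OF s T_nonneg[OF Y]])
    ultimately show ?thesis unfolding Wfun_def using enn2real_ennreal[OF S0] by simp
  qed
  show "\<not> summable (\<lambda>k. T k Y) \<Longrightarrow> Wfun f U \<alpha> Y = 1"
  proof -
    assume ns: "\<not> summable (\<lambda>k. T k Y)"
    have "(\<Sum>k. ennreal (T k Y)) = \<infinity>"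
    proof (rule ccontr)
      assume "(\<Sum>k. ennreal (T k Y)) \<noteq> \<infinity>"
      then have "(\<Sum>k. ennreal (T k Y)) \<noteq> top" by simp
      then have "summable (\<lambda>k. T k Y)" by (rule summable_suminf_not_top[OF T_nonneg[OF Y]])
      with ns show False ..
    qed
    then have "Vfun f U \<alpha> Y = \<infinity>" unfolding V .
    then show ?thesis unfolding Wfun_def by simp
  qed
qed

end

context cs
begin

lemma W_bounds: "Y \<noteq> {} \<Longrightarrow> Wfun f U \<alpha> Y \<le> 1"
  using W_eq[of Y] by (cases "summable (\<lambda>k. T k Y)") auto

lemma W_cont_summable:
  assumes X: "compact X" "X \<noteq> {}" and e: "\<epsilon> > 0" and st: "summable (\<lambda>k. T k X)"
  shows "\<exists>\<delta>>0. \<forall>Y. compact Y \<and> Y \<noteq> {} \<and> nhausdist N X Y < \<delta> \<longrightarrow>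
     \<bar>Wfun f U \<alpha> Y - Wfun f U \<alpha> X\<bar> < \<epsilon>"
proof -
  define t where "t = (\<lambda>k. T k X)"
  define S where "S = suminf t"
  define e1 where "e1 = \<epsilon> / 4"
  have e1: "e1 > 0" unfolding e1_def using e by simp
  have t0: "\<And>k. t k \<ge> 0" unfolding t_def using T_nonneg[OF X(2)] by simp
  have st': "summable t" using st unfolding t_def .
  obtain K0 where K0: "\<forall>n\<ge>K0. norm ((\<Sum>k<n. t k) - S) < e1"
    using summable_LIMSEQ[OF st'] e1 unfolding LIMSEQ_iff S_def by blast
  then have "norm ((\<Sum>k<K0. t k) - S) < e1" by simp
  then have K0': "(\<Sum>k<K0. t k) \<ge> S - e1" by simp
  obtain \<rho> where \<rho>: "\<rho> > 0" "\<rho> \<le> r" "\<forall>s\<in>{0..\<rho>}. suminf (g s) \<le> e1"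
    using tail_small[OF e1] by blast
  have thr: "alo * (\<rho>/2) powr pbar > 0" using alo_pos \<rho> by simp
  obtain K1 where K1: "\<forall>n\<ge>K1. norm (t n - 0) < alo * (\<rho>/2) powr pbar"
    using summable_LIMSEQ_zero[OF st'] thr unfolding LIMSEQ_iff by blast
  then have "norm (t K1 - 0) < alo * (\<rho>/2) powr pbar" by simp
  then have "t K1 < alo * (\<rho>/2) powr pbar" using t0[of K1] by simp
  then have "Inf (\<alpha> ` reach f U X K1) < alo * (\<rho>/2) powr pbar"
    unfolding t_def T_def Psi_def .
  moreover have "\<alpha> ` reach f U X K1 \<noteq> {}" using reach_ne[OF X(2)] by simp
  ultimately have "\<exists>w\<in>\<alpha> ` reach f U X K1. w < alo * (\<rho>/2) powr pbar"
    by (intro cInf_lessD)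
  then obtain w where w: "w \<in> \<alpha> ` reach f U X K1" "w < alo * (\<rho>/2) powr pbar" by (rule bexE)
  from w(1) obtain z where "z \<in> reach f U X K1" "w = \<alpha> z" by (rule imageE)
  with w(2) have z: "z \<in> reach f U X K1" "\<alpha> z < alo * (\<rho>/2) powr pbar" by simp_all
  have "\<exists>x \<pi>. z = traj f x \<pi> K1 \<and> x \<in> X \<and> (\<forall>j. \<pi> j \<in> U)"
    using z(1) unfolding reach_def by simp
  then obtain x0 \<pi>0 where x0: "z = traj f x0 \<pi>0 K1" "x0 \<in> X" "\<forall>j. \<pi>0 j \<in> U"
    by blast
  have dz: "ndist N z A < \<rho>/2"
  proof (rule ccontr)
    assume "\<not> ndist N z A < \<rho>/2"
    then have "(\<rho>/2) powr pbar \<le> ndist N z A powr pbar"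
      using \<rho> pbar_ge p_pos by (intro powr_mono2) auto
    then have "alo * (\<rho>/2) powr pbar \<le> alo * ndist N z A powr pbar"
      using alo_pos by simp
    also have "\<dots> \<le> \<alpha> z" by (rule \<alpha>_lower)
    finally show False using z(2) by simp
  qed
  have "continuous_on UNIV (\<lambda>y. traj f y \<pi>0 K1)" by (rule traj_cont[OF f_cont])
  moreover have "\<rho> / (2 * C) > 0" using \<rho> C_pos by simp
  ultimately obtain \<eta> where \<eta>: "\<eta> > 0" "\<And>y. dist y x0 < \<eta> \<Longrightarrow>
      dist (traj f y \<pi>0 K1) (traj f x0 \<pi>0 K1) < \<rho> / (2 * C)"
    unfolding continuous_on_iff by (metis UNIV_I)
  obtain d1 where d1: "d1 > 0" "\<And>Y. Y \<noteq> {} \<and> close d1 X Y \<Longrightarrow>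
     \<bar>(\<Sum>k<K1. T k Y) - (\<Sum>k<K1. T k X)\<bar> \<le> e1" using psum_cont[OF X e1, of K1] by blast
  obtain d2 where d2: "d2 > 0" "\<And>Y. Y \<noteq> {} \<and> close d2 X Y \<Longrightarrow>
     \<bar>(\<Sum>k<K0. T k Y) - (\<Sum>k<K0. T k X)\<bar> \<le> e1" using psum_cont[OF X e1, of K0] by blast
  define \<delta> where "\<delta> = min (c * \<eta>) (min d1 d2)"
  have \<delta>: "\<delta> > 0" unfolding \<delta>_def using c_pos \<eta> d1 d2 by simp
  show ?thesis
  proof (intro exI[of _ \<delta>] conjI allI impI)
    show "\<delta> > 0" by (rule \<delta>)
    fix Y assume Y: "compact Y \<and> Y \<noteq> {} \<and> nhausdist N X Y < \<delta>"
    then have Yne: "Y \<noteq> {}" by simp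
    have cl: "close \<delta> X Y" using haus_close[OF X] Y by blast
    then have cl1: "close d1 X Y" and cl2: "close d2 X Y" and cl0: "close (c * \<eta>) X Y"
      using close_mono unfolding \<delta>_def by auto
    obtain y0 where y0: "y0 \<in> Y" "N (x0 - y0) < c * \<eta>" using cl0 x0(2) unfolding close_def by blast
    have "norm (x0 - y0) < \<eta>" using N_small[OF y0(2)] .
    then have "dist y0 x0 < \<eta>" by (simp add: dist_norm norm_minus_commute)
    then have "dist (traj f y0 \<pi>0 K1) z < \<rho> / (2 * C)" using \<eta>(2) x0(1) by simp
    then have "norm (traj f y0 \<pi>0 K1 - z) < \<rho> / (2 * C)" by (simp add: dist_norm)
    then have "C * norm (traj f y0 \<pi>0 K1 - z) < C * (\<rho> / (2 * C))"
      by (rule mult_strict_left_mono[OF _ C_pos])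
    moreover have "C * (\<rho> / (2 * C)) = \<rho> / 2" using C_pos by simp
    ultimately have "N (traj f y0 \<pi>0 K1 - z) < \<rho> / 2"
      using C_up[of "traj f y0 \<pi>0 K1 - z"] by linarith
    then have "ndist N (traj f y0 \<pi>0 K1) A < \<rho>"
      using ndist_tri[OF A_ne, of "traj f y0 \<pi>0 K1" z] dz by linarith
    then have "ndist N (traj f y0 \<pi>0 K1) A \<le> \<rho>" by simp
    then have tl: "summable (\<lambda>k. T k Y) \<and> suminf (\<lambda>k. T k Y) \<le> (\<Sum>k<K1. T k Y) + e1"
      by (rule Y_tail[OF Yne y0(1) x0(3) _ \<rho>(2) \<rho>(3)])
    then have sY: "summable (\<lambda>k. T k Y)" by simp
    have "(\<Sum>k<K1. T k X) \<le> S"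
      unfolding S_def t_def using sum_le_suminf[OF st, of "{..<K1}"] T_nonneg[OF X(2)] by simp
    then have up: "suminf (\<lambda>k. T k Y) \<le> S + 2 * e1" using tl d1(2)[OF conjI[OF Yne cl1]] by linarith
    have "(\<Sum>k<K0. T k Y) \<le> suminf (\<lambda>k. T k Y)"
      using sum_le_suminf[OF sY, of "{..<K0}"] T_nonneg[OF Yne] by simp
    then have lo: "suminf (\<lambda>k. T k Y) \<ge> S - 2 * e1"
      using K0' d2(2)[OF conjI[OF Yne cl2]] unfolding t_def by linarith
    have SY0: "suminf (\<lambda>k. T k Y) \<ge> 0" by (rule suminf_nonneg[OF sY T_nonneg[OF Yne]])
    have S0: "S \<ge> 0" unfolding S_def by (rule suminf_nonneg[OF st' t0])
    have "\<bar>Wfun f U \<alpha> Y - Wfun f U \<alpha> X\<bar> = \<bar>exp (- S) - exp (- suminf (\<lambda>k. T k Y))\<bar>"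
      using W_eq(1)[OF Yne sY] W_eq(1)[OF X(2) st] unfolding S_def t_def by simp
    also have "\<dots> \<le> \<bar>S - suminf (\<lambda>k. T k Y)\<bar>" by (rule exp_lip[OF S0 SY0])
    also have "\<dots> \<le> 2 * e1" using up lo by (simp add: abs_le_iff)
    also have "\<dots> < \<epsilon>" unfolding e1_def using e by simp
    finally show "\<bar>Wfun f U \<alpha> Y - Wfun f U \<alpha> X\<bar> < \<epsilon>" .
  qed
qed

lemma W_cont_nonsummable:
  assumes X: "compact X" "X \<noteq> {}" and e: "\<epsilon> > 0" and ns: "\<not> summable (\<lambda>k. T k X)"
  shows "\<exists>\<delta>>0. \<forall>Y. compact Y \<and> Y \<noteq> {} \<and> nhausdist N X Y < \<delta> \<longrightarrow>
     \<bar>Wfun f U \<alpha> Y - Wfun f U \<alpha> X\<bar> < \<epsilon>"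
proof -
  define L where "L = 1 / \<epsilon>"
  have L0: "L > 0" unfolding L_def using e by simp
  have expL: "exp (- L) < \<epsilon>"
  proof -
    have "1 / \<epsilon> < exp L" using exp_ge_add_one_self[of L] unfolding L_def by linarith
    then have "1 < \<epsilon> * exp L" using e by (simp add: field_simps)
    then show ?thesis by (simp add: exp_minus field_simps)
  qed
  obtain K where K: "(\<Sum>k<K. T k X) > L + 1"
  proof (rule ccontr)
    assume "\<not> thesis"
    then have "\<forall>K. (\<Sum>k<K. T k X) \<le> L + 1" using that by (meson not_less)
    then have "summable (\<lambda>k. T k X)"
      by (intro summableI_nonneg_bounded[of _ "L + 1"]) (auto simp: T_nonneg[OF X(2)])
    with ns show False ..
  qed
  obtain d where d: "d > 0" "\<And>Y. Y \<noteq> {} \<and> close d X Y \<Longrightarrow>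
     \<bar>(\<Sum>k<K. T k Y) - (\<Sum>k<K. T k X)\<bar> \<le> 1" using psum_cont[OF X zero_less_one, of K] by blast
  show ?thesis
  proof (intro exI[of _ d] conjI allI impI)
    show "d > 0" by (rule d)
    fix Y assume Y: "compact Y \<and> Y \<noteq> {} \<and> nhausdist N X Y < d"
    then have Yne: "Y \<noteq> {}" by simp
    have cl: "close d X Y" using haus_close[OF X] Y by blast
    have pY: "(\<Sum>k<K. T k Y) \<ge> L" using d(2)[OF conjI[OF Yne cl]] K by linarith
    have WX: "Wfun f U \<alpha> X = 1" by (rule W_eq(2)[OF X(2) ns])
    show "\<bar>Wfun f U \<alpha> Y - Wfun f U \<alpha> X\<bar> < \<epsilon>"
    proof (cases "summable (\<lambda>k. T k Y)")
      case True
      have "(\<Sum>k<K. T k Y) \<le> suminf (\<lambda>k. T k Y)"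
        using sum_le_suminf[OF True, of "{..<K}"] T_nonneg[OF Yne] by simp
      then have "exp (- suminf (\<lambda>k. T k Y)) \<le> exp (- L)" using pY by simp
      then have "exp (- suminf (\<lambda>k. T k Y)) < \<epsilon>" using expL by linarith
      then show ?thesis using W_eq(1)[OF Yne True] WX by simp
    next
      case False
      then show ?thesis using W_eq(2)[OF Yne False] WX e by simp
    qed
  qed
qed

lemma W_cont:
  assumes X: "compact X" "X \<noteq> {}" and e: "\<epsilon> > 0"
  shows "\<exists>\<delta>>0. \<forall>Y. compact Y \<and> Y \<noteq> {} \<and> nhausdist N X Y < \<delta> \<longrightarrow>
     \<bar>Wfun f U \<alpha> Y - Wfun f U \<alpha> X\<bar> < \<epsilon>"
  using W_cont_summable[OF X e] W_cont_nonsummable[OF X e] by blast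

end

theorem corollary9:
  fixes N :: "real^'n \<Rightarrow> real"
    and f :: "real^'n \<Rightarrow> real^'m \<Rightarrow> real^'n"
    and U :: "(real^'m) set"
    and A :: "(real^'n) set"
    and r M p pbar alo ahi :: real
    and lam :: "real \<Rightarrow> nat \<Rightarrow> real"
    and \<alpha> :: "real^'n \<Rightarrow> real"
  assumes normN: "is_norm N"
    and f_cont: "continuous_on UNIV (\<lambda>(x, u). f x u)"
    and U_compact: "compact U" and U_ne: "U \<noteq> {}"
    and A_compact: "compact A" and A_ne: "A \<noteq> {}"
    and A_inv: "controlled_invariant f U A"
    and r_pos: "r > 0" and M_ge: "M \<ge> 1" and p_pos: "p > 0"
    and lam_nonneg: "\<And>s k. s \<in> {0..r} \<Longrightarrow> lam s k \<ge> 0"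
    and lam_cont: "\<And>k. continuous_on {0..r} (\<lambda>s. lam s k)"
    and lam_mono: "\<And>k s t. s \<in> {0..r} \<Longrightarrow> t \<in> {0..r} \<Longrightarrow> s \<le> t \<Longrightarrow> lam s k \<le> lam t k"
    and lam_zero: "\<And>k. lam 0 k = 0"
    and lam_antimono: "\<And>s k l. s \<in> {0..r} \<Longrightarrow> k \<le> l \<Longrightarrow> lam s l \<le> lam s k"
    and lam_init: "\<And>s. s \<in> {0..r} \<Longrightarrow> lam s 0 \<le> s"
    and lam_summable: "summable (\<lambda>k. lam r k powr p)"
    and stabilizable: "\<And>x. ndist N x A \<le> r \<Longrightarrow>
        \<exists>\<pi>. (\<forall>j. \<pi> j \<in> U) \<and> (\<forall>k. ndist N (traj f x \<pi> k) A \<le> M * lam (ndist N x A) k)"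
    and \<alpha>_cont: "continuous_on UNIV \<alpha>"
    and alo_pos: "alo > 0" and ahi_pos: "ahi > 0" and pbar_ge: "pbar \<ge> p"
    and \<alpha>_lower: "\<And>x. alo * ndist N x A powr pbar \<le> \<alpha> x"
    and \<alpha>_upper: "\<And>x. \<alpha> x \<le> ahi * ndist N x A powr pbar"
  shows "\<forall>X. compact X \<and> X \<noteq> {} \<longrightarrow> (\<forall>\<epsilon>>0. \<exists>\<delta>>0. \<forall>Y. compact Y \<and> Y \<noteq> {} \<and>
            nhausdist N X Y < \<delta> \<longrightarrow> \<bar>Wfun f U \<alpha> Y - Wfun f U \<alpha> X\<bar> < \<epsilon>)"
proof -
  obtain c where c: "c > 0" "\<And>x. c * norm x \<le> N x" using norm_lower[OF normN] by blast
  obtain C where C: "C > 0" "\<And>x. N x \<le> C * norm x" using norm_upper[OF normN] by blast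
  have \<alpha>0: "\<And>x. \<alpha> x \<ge> 0"
  proof -
    fix x
    have "0 \<le> alo * ndist N x A powr pbar" using alo_pos by simp
    also have "\<dots> \<le> \<alpha> x" by (rule \<alpha>_lower)
    finally show "\<alpha> x \<ge> 0" .
  qed
  interpret cs f U \<alpha> N A r M p pbar alo ahi lam c C
    by unfold_locales (fact assms c C \<alpha>0)+
  show ?thesis
  proof (intro allI impI)
    fix X :: "(real^'n) set" and \<epsilon> :: real
    assume X: "compact X \<and> X \<noteq> {}" and e: "\<epsilon> > 0"
    show "\<exists>\<delta>>0. \<forall>Y. compact Y \<and> Y \<noteq> {} \<and> nhausdist N X Y < \<delta> \<longrightarrow>
        \<bar>Wfun f U \<alpha> Y - Wfun f U \<alpha> X\<bar> < \<epsilon>"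
      using W_cont[of X \<epsilon>] X e by blast
  qed
qed

end
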